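(* Let $n\ge2$ and $k\ge1$ be integers, and let $c(n-1,k)$ be the number of Young diagrams fitting in the staircase shape $(n-1,n-2,\dots,1)$ that have exactly $k$ corners $(i,j)$ satisfying $i+j<n$. Then $$c(n-1,k)=\sum_{i=1}^{n-1-k}\frac{i}{n-i}\binom{n-i}{k}\binom{n-1}{k+i}.$$ Furthermore, there are exactly $2^{n-1}$ Young diagrams fitting in $(n-1,n-2,\dots,1)$ that have no corner $(i,j)$ with $i+j<n$ (i.e. all of whose corners lie on the diagonal $i+j=n$; the empty diagram is included).
   Context: Young diagrams are drawn in English notation: the diagram of a partition $\lambda=(\lambda_1\ge\lambda_2\ge\dots)$ is the set of cells $(i,j)$ with $1\le j\le\lambda_i$, row $i$ counted from the top and column $j$ from the left. It fits in $(n-1,n-2,\dots,1)$ if $\lambda_i\le n-i$ for all $i$. A corner of the diagram is a cell $(i,j)$ of it such that neither $(i+1,j)$ nor $(i,j+1)$ belongs to the diagram. *)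

theory Defs
  imports Complex_Main
begin

text \<open>A Young diagram (English notation) is a finite set of cells (i,j), with
  i the row (from 1, top) and j the column (from 1, left), closed under moving
  up and to the left.\<close>
definition young_diagram :: "(nat \<times> nat) set \<Rightarrow> bool" where
  "young_diagram D \<longleftrightarrow> finite D \<and>
     (\<forall>(i,j)\<in>D. 1 \<le> i \<and> 1 \<le> j) \<and>
     (\<forall>(i,j)\<in>D. \<forall>i' j'. 1 \<le> i' \<and> i' \<le> i \<and> 1 \<le> j' \<and> j' \<le> j \<longrightarrow> (i',j') \<in> D)"

text \<open>Fits in the staircase (n-1, n-2, ..., 1): lambda_i <= n - i, i.e. every cell has i + j <= n.\<close>
definition fits_staircase :: "nat \<Rightarrow> (nat \<times> nat) set \<Rightarrow> bool" where
  "fits_staircase n D \<longleftrightarrow> (\<forall>(i,j)\<in>D. i + j \<le> n)"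

definition corners :: "(nat \<times> nat) set \<Rightarrow> (nat \<times> nat) set" where
  "corners D = {(i,j) \<in> D. (i+1,j) \<notin> D \<and> (i,j+1) \<notin> D}"

definition inner_corners :: "nat \<Rightarrow> (nat \<times> nat) set \<Rightarrow> (nat \<times> nat) set" where
  "inner_corners n D = {(i,j) \<in> corners D. i + j < n}"

definition c_count :: "nat \<Rightarrow> nat \<Rightarrow> nat" where
  "c_count n k = card {D. young_diagram D \<and> fits_staircase n D \<and> card (inner_corners n D) = k}"

end

theory Submission
  imports Defs
begin


definition cb :: "int \<Rightarrow> int \<Rightarrow> real" where
  "cb x r = (if r < 0 then 0 else (of_int x :: real) gchoose (nat r))"

lemma cb_pascal: "cb x r = cb (x - 1) r + cb (x - 1) (r - 1)"
proof (cases "r < 0")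
  case True then show ?thesis by (simp add: cb_def)
next
  case False
  show ?thesis
  proof (cases "r = 0")
    case True then show ?thesis by (simp add: cb_def)
  next
    case False
    define k where "k = nat r - 1"
    have k: "r = int (Suc k)" using False \<open>\<not> r < 0\<close> unfolding k_def by linarith
    have "(of_int (x-1) + 1 :: real) gchoose (Suc k) = (of_int (x-1) gchoose k) + (of_int (x-1) gchoose (Suc k))"
      by (rule gbinomial_Suc_Suc)
    moreover have "nat r = Suc k" "nat (r - 1) = k" using k by auto
    ultimately show ?thesis using k by (simp add: cb_def)
  qed
qed

lemma cb_zero_high: "x \<ge> 0 \<Longrightarrow> r > x \<Longrightarrow> cb x r = 0"
proof -
  assume "x \<ge> 0" "r > x"
  then have "(of_int x :: real) gchoose (nat r) = real (nat x choose nat r)"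
    by (simp add: binomial_gbinomial)
  also have "\<dots> = 0" using \<open>x\<ge>0\<close> \<open>r > x\<close> by simp
  finally show ?thesis using \<open>r > x\<close> \<open>x \<ge> 0\<close> by (simp add: cb_def)
qed

lemma cb_0 [simp]: "cb x 0 = 1" by (simp add: cb_def)
lemma cb_neg: "r < 0 \<Longrightarrow> cb x r = 0" by (simp add: cb_def)

lemma cb_nat: "cb (int a) (int b) = real (a choose b)"
  by (simp add: cb_def binomial_gbinomial)

definition Q :: "int \<Rightarrow> int \<Rightarrow> int \<Rightarrow> int \<Rightarrow> real" where
  "Q m u j k = cb (m + u - 1) k * cb (m + j) (j + k) - cb (m + u - 1) (k - 1) * cb (m + j) (j + k + 1)"

lemma Q_I1: "Q m (u+1) j k - Q (m-1) (u+2) j k = Q m u j k - Q (m-1) (u+1) j k + Q (m-1) (u+1) j (k-1)"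
proof -
  define a where "a = m + u"
  define B where "B = m + j"
  have e1: "Q m (u+1) j k = cb a k * cb B (j+k) - cb a (k-1) * cb B (j+k+1)"
    unfolding Q_def a_def B_def by (simp add: algebra_simps)
  have e2: "Q (m-1) (u+2) j k = cb a k * cb (B-1) (j+k) - cb a (k-1) * cb (B-1) (j+k+1)"
    unfolding Q_def a_def B_def by (simp add: algebra_simps)
  have e3: "Q m u j k = cb (a-1) k * cb B (j+k) - cb (a-1) (k-1) * cb B (j+k+1)"
    unfolding Q_def a_def B_def by (simp add: algebra_simps)
  have e4: "Q (m-1) (u+1) j k = cb (a-1) k * cb (B-1) (j+k) - cb (a-1) (k-1) * cb (B-1) (j+k+1)"
    unfolding Q_def a_def B_def by (simp add: algebra_simps)
  have e5: "Q (m-1) (u+1) j (k-1) = cb (a-1) (k-1) * cb (B-1) (j+k-1) - cb (a-1) (k-1-1) * cb (B-1) (j+k)"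
    unfolding Q_def a_def B_def by (simp add: algebra_simps)
  have p1: "cb a k = cb (a-1) k + cb (a-1) (k-1)" by (rule cb_pascal)
  have p2: "cb a (k-1) = cb (a-1) (k-1) + cb (a-1) (k-1-1)" by (rule cb_pascal)
  have p3: "cb B (j+k) = cb (B-1) (j+k) + cb (B-1) (j+k-1)" by (rule cb_pascal)
  have p4: "cb B (j+k+1) = cb (B-1) (j+k+1) + cb (B-1) (j+k)"
    using cb_pascal[of B "j+k+1"] by simp
  show ?thesis unfolding e1 e2 e3 e4 e5 p1 p2 p3 p4 by (simp add: algebra_simps)
qed

lemma Q_I2: "Q m 0 j k = Q (m-1) 1 j k + Q m 0 (j-1) k"
proof -
  have e1: "Q m 0 j k = cb (m-1) k * cb (m+j) (j+k) - cb (m-1) (k-1) * cb (m+j) (j+k+1)"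
    unfolding Q_def by simp
  have e2: "Q (m-1) 1 j k = cb (m-1) k * cb (m+j-1) (j+k) - cb (m-1) (k-1) * cb (m+j-1) (j+k+1)"
    unfolding Q_def by (simp add: algebra_simps)
  have e3: "Q m 0 (j-1) k = cb (m-1) k * cb (m+j-1) (j+k-1) - cb (m-1) (k-1) * cb (m+j-1) (j+k)"
    unfolding Q_def by (simp add: algebra_simps)
  have p3: "cb (m+j) (j+k) = cb (m+j-1) (j+k) + cb (m+j-1) (j+k-1)" by (rule cb_pascal)
  have p4: "cb (m+j) (j+k+1) = cb (m+j-1) (j+k+1) + cb (m+j-1) (j+k)"
    using cb_pascal[of "m+j" "j+k+1"] by simp
  show ?thesis unfolding e1 e2 e3 p3 p4 by (simp add: algebra_simps)
qed

lemma cb_diag: "x \<ge> 0 \<Longrightarrow> cb x x = 1"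
  using cb_nat[of "nat x" "nat x"] by simp

lemma Q_0: "j \<ge> 0 \<Longrightarrow> Q 0 u j k = (if k = 0 then 1 else 0)"
  unfolding Q_def
  by (cases "k < 0") (auto simp: cb_neg cb_zero_high cb_diag)

lemma Q_m1: "j \<ge> 1 \<Longrightarrow> Q (-1) 1 j k = 0"
  unfolding Q_def
  by (cases "k < 0") (auto simp: cb_neg cb_zero_high)

lemma Q_jm1: "Q m 0 (-1) k = 0"
  unfolding Q_def by (simp add: algebra_simps)

definition TF :: "nat \<Rightarrow> nat \<Rightarrow> int \<Rightarrow> real" where
  "TF n l k = (\<Sum>j\<le>l. Q (int l - int j) (int n - 1 - int l) (int j) k)"

lemma TF_0: "TF n 0 k = (if k = 0 then 1 else 0)"
  unfolding TF_def by (simp add: Q_0)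

lemma TF_N1:
  assumes "1 \<le> l" "l + 2 \<le> n"
  shows "TF n l k - TF n (l-1) k = TF (n-1) l k - TF (n-1) (l-1) k + TF (n-1) (l-1) (k-1)"
proof -
  obtain p where p: "l = Suc p" using assms(1) by (cases l) auto
  define r where "r = n - p - 3"
  have r: "n = p + 3 + r" using assms p unfolding r_def by arith
  have t1: "TF n l k = (\<Sum>j\<le>p. Q (int (Suc p) - int j) (int r + 1) (int j) k) + Q 0 (int r + 1) (int (Suc p)) k"
    unfolding TF_def p r by (simp add: algebra_simps)
  have t2: "TF n (l-1) k = (\<Sum>j\<le>p. Q (int p - int j) (int r + 2) (int j) k)"
    unfolding TF_def p r by (simp add: algebra_simps)
  have t3: "TF (n-1) l k = (\<Sum>j\<le>p. Q (int (Suc p) - int j) (int r) (int j) k) + Q 0 (int r) (int (Suc p)) k"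
    unfolding TF_def p r by (simp add: algebra_simps)
  have t4: "TF (n-1) (l-1) k = (\<Sum>j\<le>p. Q (int p - int j) (int r + 1) (int j) k)"
    unfolding TF_def p r by (simp add: algebra_simps)
  have t5: "TF (n-1) (l-1) (k-1) = (\<Sum>j\<le>p. Q (int p - int j) (int r + 1) (int j) (k-1))"
    unfolding TF_def p r by (simp add: algebra_simps)
  have key: "Q (int (Suc p) - int j) (int r + 1) (int j) k - Q (int p - int j) (int r + 2) (int j) k
     = Q (int (Suc p) - int j) (int r) (int j) k - Q (int p - int j) (int r + 1) (int j) k
       + Q (int p - int j) (int r + 1) (int j) (k-1)" for j
  proof -
    have e: "int (Suc p) - int j - 1 = int p - int j" by simp
    show ?thesis using Q_I1[of "int (Suc p) - int j" "int r" "int j" k] unfolding e by (simp add: add.commute)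
  qed
  have q0: "Q 0 (int r + 1) (int (Suc p)) k = Q 0 (int r) (int (Suc p)) k" by (simp add: Q_0)
  have "(\<Sum>j\<le>p. Q (int (Suc p) - int j) (int r + 1) (int j) k) - (\<Sum>j\<le>p. Q (int p - int j) (int r + 2) (int j) k)
     = (\<Sum>j\<le>p. Q (int (Suc p) - int j) (int r) (int j) k) - (\<Sum>j\<le>p. Q (int p - int j) (int r + 1) (int j) k)
       + (\<Sum>j\<le>p. Q (int p - int j) (int r + 1) (int j) (k-1))"
    unfolding sum_subtractf[symmetric] sum.distrib[symmetric] using key by (intro sum.cong) auto
  then show ?thesis unfolding t1 t2 t3 t4 t5 q0 by simp
qed

lemma TF_N2:
  shows "TF (Suc (Suc p)) (Suc p) k - TF (Suc (Suc p)) p k = TF (Suc p) p k"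
proof -
  have "TF (Suc (Suc p)) (Suc p) k = (\<Sum>j\<le>Suc p. Q (int (Suc p) - int j) 0 (int j) k)"
    unfolding TF_def by simp
  also have "\<dots> = (\<Sum>j\<le>Suc p. Q (int p - int j) 1 (int j) k + Q (int (Suc p) - int j) 0 (int j - 1) k)"
  proof (rule sum.cong)
    fix j
    have e: "int (Suc p) - int j - 1 = int p - int j" by simp
    show "Q (int (Suc p) - int j) 0 (int j) k = Q (int p - int j) 1 (int j) k + Q (int (Suc p) - int j) 0 (int j - 1) k"
      using Q_I2[of "int (Suc p) - int j" "int j" k] unfolding e .
  qed simp
  also have "\<dots> = (\<Sum>j\<le>Suc p. Q (int p - int j) 1 (int j) k) + (\<Sum>j\<le>Suc p. Q (int (Suc p) - int j) 0 (int j - 1) k)"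
    by (simp add: sum.distrib)
  also have "(\<Sum>j\<le>Suc p. Q (int p - int j) 1 (int j) k) = TF (Suc (Suc p)) p k"
    unfolding TF_def using Q_m1[of "int (Suc p)" k] by simp
  also have "(\<Sum>j\<le>Suc p. Q (int (Suc p) - int j) 0 (int j - 1) k) = TF (Suc p) p k"
    unfolding TF_def sum.atMost_Suc_shift using Q_jm1 by simp
  finally show ?thesis by simp
qed



lemma yd_down: "young_diagram D \<Longrightarrow> (i,j) \<in> D \<Longrightarrow> 1 \<le> i' \<Longrightarrow> i' \<le> i \<Longrightarrow> 1 \<le> j' \<Longrightarrow> j' \<le> j \<Longrightarrow> (i',j') \<in> D"
  unfolding young_diagram_def by blast

lemma yd_pos: "young_diagram D \<Longrightarrow> (i,j) \<in> D \<Longrightarrow> 1 \<le> i \<and> 1 \<le> j"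
  unfolding young_diagram_def by blast

lemma yd_fin: "young_diagram D \<Longrightarrow> finite D"
  unfolding young_diagram_def by blast

definition AS :: "nat \<Rightarrow> nat \<Rightarrow> nat \<Rightarrow> (nat \<times> nat) set set" where
  "AS n l k = {D. young_diagram D \<and> fits_staircase n D \<and> (1, l+1) \<notin> D \<and> card (inner_corners n D) = k}"

lemma fits_sub: "fits_staircase n D \<Longrightarrow> young_diagram D \<Longrightarrow> D \<subseteq> {..n} \<times> {..n}"
  unfolding fits_staircase_def by auto

lemma finite_AS: "finite (AS n l k)"
proof -
  have "AS n l k \<subseteq> Pow ({..n} \<times> {..n})" unfolding AS_def using fits_sub by blast
  then show ?thesis by (rule finite_subset) simp
qed

lemma yd_empty: "young_diagram {}" unfolding young_diagram_def by simp

lemma AS0: "AS n 0 k = (if k = 0 then {{}} else {})"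
proof -
  have h: "D = {}" if "young_diagram D" "(1,1) \<notin> D" for D
  proof (rule ccontr)
    assume "D \<noteq> {}"
    then obtain i j where ij: "(i,j) \<in> D" by auto
    then have "(1,1) \<in> D" using yd_down[OF that(1) ij, of 1 1] yd_pos[OF that(1) ij] by simp
    then show False using that by simp
  qed
  have i0: "inner_corners n {} = {}" unfolding inner_corners_def corners_def by simp
  have f0: "fits_staircase n {}" unfolding fits_staircase_def by simp
  show ?thesis
  proof (rule set_eqI)
    fix D
    show "D \<in> AS n 0 k \<longleftrightarrow> D \<in> (if k = 0 then {{}} else {})"
    proof
      assume "D \<in> AS n 0 k"
      then have "D = {}" "card (inner_corners n D) = k" using h unfolding AS_def by auto
      then show "D \<in> (if k = 0 then {{}} else {})" using i0 by auto
    next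
      assume "D \<in> (if k = 0 then {{}} else {})"
      then have "D = {}" "k = 0" by (auto split: if_splits)
      then show "D \<in> AS n 0 k" unfolding AS_def using i0 f0 yd_empty by simp
    qed
  qed
qed

definition ES :: "nat \<Rightarrow> nat \<Rightarrow> nat \<Rightarrow> (nat \<times> nat) set set" where
  "ES n l k = {D \<in> AS n l k. (1,l) \<in> D}"

lemma AS_split:
  assumes "l \<ge> 1"
  shows "card (AS n l k) = card (AS n (l-1) k) + card (ES n l k)"
proof -
  have sub: "AS n (l-1) k \<subseteq> AS n l k"
  proof
    fix D assume D: "D \<in> AS n (l-1) k"
    have "(1, l+1) \<notin> D"
    proof
      assume "(1, l+1) \<in> D"
      then have "(1, l) \<in> D" using yd_down[of D 1 "l+1" 1 l] D assms unfolding AS_def by auto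
      then show False using D assms unfolding AS_def by simp
    qed
    then show "D \<in> AS n l k" using D unfolding AS_def by simp
  qed
  have "ES n l k = AS n l k - AS n (l-1) k" unfolding ES_def AS_def using assms by auto
  then have "card (ES n l k) = card (AS n l k) - card (AS n (l-1) k)"
    using card_Diff_subset[OF finite_subset[OF sub finite_AS] sub] by simp
  moreover have "card (AS n (l-1) k) \<le> card (AS n l k)" using card_mono[OF finite_AS sub] .
  ultimately show ?thesis by simp
qed

definition sh :: "(nat \<times> nat) set \<Rightarrow> (nat \<times> nat) set" where
  "sh D = (\<lambda>(i,j). (Suc i, j)) ` D"

definition phi :: "nat \<Rightarrow> (nat \<times> nat) set \<Rightarrow> (nat \<times> nat) set" where
  "phi l D = {(i,j). i = 1 \<and> 1 \<le> j \<and> j \<le> l} \<union> sh D"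

definition psi :: "(nat \<times> nat) set \<Rightarrow> (nat \<times> nat) set" where
  "psi D = {(i,j). 1 \<le> i \<and> (Suc i, j) \<in> D}"

lemma mem_sh: "(a, b) \<in> sh D \<longleftrightarrow> (a \<ge> 1 \<and> (a - 1, b) \<in> D)"
  unfolding sh_def by (cases a) force+

lemma mem_phi: "(a, b) \<in> phi l D \<longleftrightarrow> (a = 1 \<and> 1 \<le> b \<and> b \<le> l) \<or> (a \<ge> 1 \<and> (a - 1, b) \<in> D)"
  by (simp add: phi_def mem_sh)

lemma row1_bound:
  assumes y: "young_diagram D" and r: "(1, l+1) \<notin> D" and ij: "(i, j) \<in> D"
  shows "j \<le> l"
proof (rule ccontr)
  assume "\<not> j \<le> l"
  then have "(1, l+1) \<in> D" using yd_down[OF y ij, of 1 "l+1"] yd_pos[OF y ij] by simp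
  then show False using r by simp
qed

lemma phi_young:
  assumes "young_diagram D" "(1, l+1) \<notin> D"
  shows "young_diagram (phi l D)"
proof -
  have "finite (phi l D)"
  proof -
    have "{(i,j). i = 1 \<and> 1 \<le> j \<and> j \<le> l} \<subseteq> {1} \<times> {..l}" by auto
    then have "finite {(i,j). i = (1::nat) \<and> 1 \<le> j \<and> j \<le> l}" by (rule finite_subset) simp
    then show ?thesis unfolding phi_def sh_def using yd_fin[OF assms(1)] by simp
  qed
  moreover have "\<forall>(i,j)\<in>phi l D. 1 \<le> i \<and> 1 \<le> j"
    using yd_pos[OF assms(1)] unfolding mem_phi by (auto simp: mem_phi)
  moreover have "\<forall>(i,j)\<in>phi l D. \<forall>i' j'. 1 \<le> i' \<and> i' \<le> i \<and> 1 \<le> j' \<and> j' \<le> j \<longrightarrow> (i',j') \<in> phi l D"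
  proof (intro ballI allI impI, clarify)
    fix i j i' j'
    assume ij: "(i,j) \<in> phi l D" and h: "1 \<le> i'" "i' \<le> i" "1 \<le> j'" "j' \<le> j"
    show "(i',j') \<in> phi l D"
    proof (cases "i = 1")
      case True
      then have "j \<le> l" using ij yd_pos[OF assms(1)] unfolding mem_phi by auto
      then show ?thesis using True h unfolding mem_phi by auto
    next
      case False
      then have D: "(i - 1, j) \<in> D" and "i \<ge> 2" using ij unfolding mem_phi by auto
      show ?thesis
      proof (cases "i' = 1")
        case True
        have "j \<le> l" using row1_bound[OF assms D] .
        then show ?thesis using True h unfolding mem_phi by auto
      next
        case False
        then have "(i' - 1, j') \<in> D" using yd_down[OF assms(1) D, of "i'-1" j'] h by auto
        then show ?thesis unfolding mem_phi using h by auto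
      qed
    qed
  qed
  ultimately show ?thesis unfolding young_diagram_def by blast
qed

lemma phi_fits:
  assumes "fits_staircase (n-1) D" "l + 1 \<le> n" "young_diagram D"
  shows "fits_staircase n (phi l D)"
  unfolding fits_staircase_def
proof clarify
  fix a b assume "(a,b) \<in> phi l D"
  then consider "a = 1" "b \<le> l" | "a \<ge> 1" "(a-1,b) \<in> D" unfolding mem_phi by auto
  then show "a + b \<le> n"
  proof cases
    case 1 then show ?thesis using assms by simp
  next
    case 2 then have "a - 1 + b \<le> n - 1" using assms(1) unfolding fits_staircase_def by auto
    then show ?thesis using 2 yd_pos[OF assms(3) 2(2)] by linarith
  qed
qed

lemma psi_phi: "young_diagram D \<Longrightarrow> psi (phi l D) = D"
  unfolding psi_def using yd_pos by (force simp: mem_phi)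

lemma phi_psi:
  assumes "young_diagram D" "(1,l) \<in> D" "(1, l+1) \<notin> D"
  shows "phi l (psi D) = D"
proof (rule set_eqI, clarify)
  fix a b
  show "(a,b) \<in> phi l (psi D) \<longleftrightarrow> (a,b) \<in> D"
  proof
    assume "(a,b) \<in> phi l (psi D)"
    then consider "a = 1" "1 \<le> b" "b \<le> l" | "a \<ge> 2" "(a, b) \<in> D"
      unfolding mem_phi psi_def by (auto simp: Suc_diff_1)
    then show "(a,b) \<in> D"
    proof cases
      case 1 then show ?thesis using yd_down[OF assms(1,2)] by auto
    qed simp
  next
    assume ab: "(a,b) \<in> D"
    then have pos: "a \<ge> 1" "b \<ge> 1" using yd_pos[OF assms(1)] by auto
    show "(a,b) \<in> phi l (psi D)"
    proof (cases "a = 1")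
      case True
      then have "b \<le> l" using row1_bound[OF assms(1,3) ab] by simp
      then show ?thesis using True pos unfolding mem_phi by auto
    next
      case False
      then show ?thesis using ab pos unfolding mem_phi psi_def by auto
    qed
  qed
qed

lemma psi_young:
  assumes "young_diagram D"
  shows "young_diagram (psi D)"
proof -
  have "psi D \<subseteq> (\<lambda>(i,j). (i - 1, j)) ` D"
  proof
    fix x assume "x \<in> psi D"
    then obtain i j where "x = (i,j)" "(Suc i, j) \<in> D" unfolding psi_def by auto
    then show "x \<in> (\<lambda>(i,j). (i - 1, j)) ` D" by (auto intro: rev_image_eqI[of "(Suc i, j)"])
  qed
  moreover have "finite ((\<lambda>(i,j). (i - 1, j)) ` D)" using yd_fin[OF assms] by simp
  ultimately have "finite (psi D)" by (rule finite_subset)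
  moreover have "\<forall>(i,j)\<in>psi D. 1 \<le> i \<and> 1 \<le> j" unfolding psi_def using yd_pos[OF assms] by auto
  moreover have "\<forall>(i,j)\<in>psi D. \<forall>i' j'. 1 \<le> i' \<and> i' \<le> i \<and> 1 \<le> j' \<and> j' \<le> j \<longrightarrow> (i',j') \<in> psi D"
    unfolding psi_def using yd_down[OF assms] by auto
  ultimately show ?thesis unfolding young_diagram_def by blast
qed

lemma psi_fits: "fits_staircase n D \<Longrightarrow> fits_staircase (n-1) (psi D)"
  unfolding fits_staircase_def psi_def by auto

lemma psi_row:
  assumes y: "young_diagram D" and r: "(1, l+1) \<notin> D"
  shows "(1, l+1) \<notin> psi D"
proof
  assume "(1, l+1) \<in> psi D"
  then have ij: "(Suc 1, l+1) \<in> D" unfolding psi_def by simp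
  have "(1, l+1) \<in> D" using yd_down[OF y ij, of 1 "l+1"] by simp
  then show False using r by simp
qed

lemma inner_phi:
  assumes "young_diagram D" "(1, l+1) \<notin> D" "l \<ge> 1" "n \<ge> 1"
  shows "inner_corners n (phi l D) =
     (if (1,l) \<notin> D \<and> 1 + l < n then {(1,l)} else {}) \<union> sh (inner_corners (n-1) D)"
proof (rule set_eqI, clarify)
  fix a b
  show "(a,b) \<in> inner_corners n (phi l D) \<longleftrightarrow>
     (a,b) \<in> (if (1,l) \<notin> D \<and> 1 + l < n then {(1,l)} else {}) \<union> sh (inner_corners (n-1) D)"
  proof (cases "a = 1")
    case True
    have "(1,b) \<notin> sh (inner_corners (n-1) D)"
      using yd_pos[OF assms(1)] by (auto simp: mem_sh inner_corners_def corners_def)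
    moreover have "(1, b) \<in> corners (phi l D) \<longleftrightarrow> b = l \<and> (1, l) \<notin> D"
    proof (cases "b = l")
      case True
      then show ?thesis unfolding corners_def using assms(3) yd_pos[OF assms(1)] by (auto simp: mem_phi)
    next
      case False
      then show ?thesis unfolding corners_def using assms(3) yd_pos[OF assms(1)] by (auto simp: mem_phi)
    qed
    ultimately show ?thesis using True unfolding inner_corners_def by auto
  next
    case False
    show ?thesis
    proof (cases "a = 0")
      case True
      then show ?thesis unfolding inner_corners_def corners_def by (auto simp: mem_phi mem_sh)
    next
      case False
      with \<open>a \<noteq> 1\<close> obtain c where c: "a = Suc c" "c \<ge> 1" by (cases a) auto
      have "(a,b) \<in> corners (phi l D) \<longleftrightarrow> (c,b) \<in> corners D"
        unfolding corners_def using c by (auto simp: mem_phi)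
      moreover have "a + b < n \<longleftrightarrow> c + b < n - 1" using c assms(4) by auto
      ultimately show ?thesis using c unfolding inner_corners_def by (auto simp: mem_sh)
    qed
  qed
qed

lemma card_sh: "finite X \<Longrightarrow> card (sh X) = card X"
  unfolding sh_def by (rule card_image) (auto simp: inj_on_def)

lemma inner_sub: "inner_corners n D \<subseteq> D"
  unfolding inner_corners_def corners_def by auto

lemma finite_inner: "young_diagram D \<Longrightarrow> finite (inner_corners n D)"
  using finite_subset[OF inner_sub yd_fin] .

lemma card_inner_phi:
  assumes "young_diagram D" "(1, l+1) \<notin> D" "l \<ge> 1" "n \<ge> 1"
  shows "card (inner_corners n (phi l D)) = card (inner_corners (n-1) D) + (if (1,l) \<notin> D \<and> 1 + l < n then 1 else 0)"
proof -
  have fin: "finite (sh (inner_corners (n-1) D))" unfolding sh_def using finite_inner[OF assms(1)] by simp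
  have "(1,l) \<notin> sh (inner_corners (n-1) D)"
    using yd_pos[OF assms(1)] inner_sub[of "n-1" D] by (auto simp: mem_sh)
  then show ?thesis unfolding inner_phi[OF assms]
    using card_sh[OF finite_inner[OF assms(1)]] fin by auto
qed



lemma finite_diag: "finite {D. young_diagram D \<and> fits_staircase n D}"
proof -
  have "{D. young_diagram D \<and> fits_staircase n D} \<subseteq> Pow ({..n} \<times> {..n})" using fits_sub by blast
  then show ?thesis by (rule finite_subset) simp
qed

lemma ES_card:
  assumes "n \<ge> 2" "l \<ge> 1" "l + 1 \<le> n"
  shows "card (ES n l k) = card (ES (n-1) l k) +
     (if l + 1 < n then (if k \<ge> 1 then card (AS (n-1) (l-1) (k-1)) else 0) else card (AS (n-1) (l-1) k))"
proof -
  define mk where "mk D' = (if (1::nat,l) \<notin> D' \<and> 1 + l < n then 1 else (0::nat))" for D'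
  define S where "S = {D'. young_diagram D' \<and> fits_staircase (n-1) D' \<and> (1,l+1) \<notin> D' \<and>
                     card (inner_corners (n-1) D') + mk D' = k}"
  have n1: "n \<ge> 1" using assms by simp
  have bij: "bij_betw (phi l) S (ES n l k)"
  proof (rule bij_betw_byWitness[where f' = psi])
    show "\<forall>a\<in>S. psi (phi l a) = a" unfolding S_def using psi_phi by auto
    show "\<forall>a'\<in>ES n l k. phi l (psi a') = a'" unfolding ES_def AS_def using phi_psi by auto
    show "phi l ` S \<subseteq> ES n l k"
    proof
      fix D assume "D \<in> phi l ` S"
      then obtain D' where D: "D = phi l D'" "D' \<in> S" by auto
      have y: "young_diagram D'" and f: "fits_staircase (n-1) D'" and r: "(1,l+1) \<notin> D'"
        and c: "card (inner_corners (n-1) D') + mk D' = k" using D(2) unfolding S_def by auto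
      have "young_diagram D" using phi_young[OF y r] D by simp
      moreover have "fits_staircase n D" using phi_fits[OF f assms(3) y] D by simp
      moreover have "(1, l+1) \<notin> D" using D yd_pos[OF y] by (auto simp: mem_phi)
      moreover have "(1, l) \<in> D" using D assms(2) by (auto simp: mem_phi)
      moreover have "card (inner_corners n D) = k"
        using card_inner_phi[OF y r assms(2) n1] c D unfolding mk_def by simp
      ultimately show "D \<in> ES n l k" unfolding ES_def AS_def by simp
    qed
    show "psi ` ES n l k \<subseteq> S"
    proof
      fix D' assume "D' \<in> psi ` ES n l k"
      then obtain D where D: "D' = psi D" "D \<in> ES n l k" by auto
      have y: "young_diagram D" and f: "fits_staircase n D" and r: "(1,l+1) \<notin> D"
        and c: "card (inner_corners n D) = k" and o: "(1,l) \<in> D" using D(2) unfolding ES_def AS_def by auto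
      have y': "young_diagram D'" using psi_young[OF y] D by simp
      have r': "(1,l+1) \<notin> D'" using psi_row[OF y r] D by simp
      have "phi l D' = D" using phi_psi[OF y o r] D by simp
      then have "card (inner_corners (n-1) D') + mk D' = k"
        using card_inner_phi[OF y' r' assms(2) n1] c unfolding mk_def by simp
      then show "D' \<in> S" unfolding S_def using y' r' psi_fits[OF f] D by simp
    qed
  qed
  then have cardS: "card (ES n l k) = card S" by (simp add: bij_betw_same_card)
  define S1 where "S1 = {D' \<in> S. (1,l) \<in> D'}"
  define S2 where "S2 = {D' \<in> S. (1,l) \<notin> D'}"
  have finS: "finite S"
    by (rule finite_subset[OF _ finite_diag[of "n-1"]]) (auto simp: S_def)
  have "S = S1 \<union> S2" "S1 \<inter> S2 = {}" unfolding S1_def S2_def by auto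
  then have cS: "card S = card S1 + card S2"
    using finS by (simp add: card_Un_disjoint)
  have "S1 = ES (n-1) l k" unfolding S1_def S_def ES_def AS_def mk_def by auto
  moreover have "card S2 = (if l + 1 < n then (if k \<ge> 1 then card (AS (n-1) (l-1) (k-1)) else 0) else card (AS (n-1) (l-1) k))"
  proof -
    have imp: "(1, l+1) \<notin> D'" if "young_diagram D'" "(1,l) \<notin> D'" for D'
      using yd_down[OF that(1), of 1 "l+1" 1 l] that assms(2) by auto
    have lm: "l - 1 + 1 = l" using assms by simp
    show ?thesis
    proof (cases "l + 1 < n")
      case True
      show ?thesis
      proof (cases "k \<ge> 1")
        case True
        have "S2 = AS (n-1) (l-1) (k-1)"
          unfolding S2_def S_def AS_def mk_def lm using imp \<open>l+1<n\<close> True by auto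
        then show ?thesis using True \<open>l+1<n\<close> by simp
      next
        case False
        have "S2 = {}" unfolding S2_def S_def mk_def using \<open>l+1<n\<close> False by auto
        then show ?thesis using False \<open>l+1<n\<close> by simp
      qed
    next
      case False
      have "S2 = AS (n-1) (l-1) k"
        unfolding S2_def S_def AS_def mk_def lm using imp False by auto
      then show ?thesis using False by simp
    qed
  qed
  ultimately show ?thesis using cardS cS by simp
qed

lemma TF_neg: "k < 0 \<Longrightarrow> TF n l k = 0"
  unfolding TF_def Q_def by (simp add: cb_neg)

lemma AS_TF: "l \<le> p \<Longrightarrow> real (card (AS (Suc p) l k)) = TF (Suc p) l (int k)"
proof (induction p arbitrary: l k)
  case 0
  then show ?case by (simp add: AS0 TF_0)
next
  case (Suc p)
  note IHo = Suc.IH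
  show ?case using Suc.prems
  proof (induction l arbitrary: k)
    case 0
    then show ?case by (simp add: AS0 TF_0)
  next
    case (Suc l')
    let ?n = "Suc (Suc p)"
    have sp: "card (AS ?n (Suc l') k) = card (AS ?n l' k) + card (ES ?n (Suc l') k)"
      using AS_split[of "Suc l'" ?n k] by simp
    have ih1: "real (card (AS ?n l' k)) = TF ?n l' (int k)" using Suc.IH Suc.prems by simp
    show ?case
    proof (cases "Suc l' + 1 < ?n")
      case True
      have e: "card (ES ?n (Suc l') k) = card (ES (Suc p) (Suc l') k) +
         (if k \<ge> 1 then card (AS (Suc p) l' (k-1)) else 0)"
        using ES_card[of ?n "Suc l'" k] True by simp
      have s2: "card (AS (Suc p) (Suc l') k) = card (AS (Suc p) l' k) + card (ES (Suc p) (Suc l') k)"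
        using AS_split[of "Suc l'" "Suc p" k] by simp
      have a1: "real (card (AS (Suc p) (Suc l') k)) = TF (Suc p) (Suc l') (int k)"
        using IHo[of "Suc l'" k] True by simp
      have a2: "real (card (AS (Suc p) l' k)) = TF (Suc p) l' (int k)"
        using IHo[of l' k] True by simp
      have a3: "real (if k \<ge> 1 then card (AS (Suc p) l' (k-1)) else 0) = TF (Suc p) l' (int k - 1)"
      proof (cases "k \<ge> 1")
        case True
        then show ?thesis using IHo[of l' "k-1"] \<open>Suc l' + 1 < ?n\<close> by (simp add: of_nat_diff)
      next
        case False
        then show ?thesis by (simp add: TF_neg)
      qed
      have N1: "TF ?n (Suc l') (int k) - TF ?n l' (int k) = TF (Suc p) (Suc l') (int k) - TF (Suc p) l' (int k) + TF (Suc p) l' (int k - 1)"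
        using TF_N1[of "Suc l'" ?n "int k"] True by simp
      have "real (card (AS ?n (Suc l') k)) = TF ?n l' (int k) + (real (card (AS (Suc p) (Suc l') k)) - real (card (AS (Suc p) l' k)))
           + real (if k \<ge> 1 then card (AS (Suc p) l' (k-1)) else 0)"
        using sp e s2 ih1 by simp
      then show ?thesis using a1 a2 a3 N1 by simp
    next
      case False
      then have l': "l' = p" using Suc.prems by simp
      have e: "card (ES ?n (Suc p) k) = card (ES (Suc p) (Suc p) k) + card (AS (Suc p) p k)"
        using ES_card[of ?n "Suc p" k] by simp
      have "ES (Suc p) (Suc p) k = {}"
      proof (rule ccontr)
        assume "ES (Suc p) (Suc p) k \<noteq> {}"
        then obtain D where "D \<in> ES (Suc p) (Suc p) k" by auto
        then have "(1, Suc p) \<in> D" "fits_staircase (Suc p) D" unfolding ES_def AS_def by auto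
        then show False unfolding fits_staircase_def by fastforce
      qed
      then have e2: "card (ES ?n (Suc p) k) = card (AS (Suc p) p k)" using e by simp
      have a2: "real (card (AS (Suc p) p k)) = TF (Suc p) p (int k)"
        using IHo[of p k] by simp
      show ?thesis using sp e2 a2 ih1 TF_N2[of p "int k"] l' by simp
    qed
  qed
qed



lemma term_id:
  assumes "M \<ge> 1" "k \<ge> 1"
  shows "real ((M-1) choose k) * real ((M+j) choose (j+k)) - real ((M-1) choose (k-1)) * real ((M+j) choose (j+k+1))
       = real (j+1) / real M * real (M choose k) * real ((M+j) choose (k+j+1))"
proof -
  obtain k' where k': "k = Suc k'" using assms(2) by (cases k) auto
  have h1: "real M * real ((M-1) choose k) = real (M-k) * real (M choose k)"
    using binomial_absorb_comp[of M k] by (metis of_nat_mult)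
  have h2: "real M * real ((M-1) choose (k-1)) = real k * real (M choose k)"
    using binomial_absorption[of k' M] k' by (metis diff_Suc_1 of_nat_mult)
  have h3a: "real (Suc (j+k)) * real ((M+j) choose (Suc (j+k))) = real (M+j) * real ((M+j-1) choose (j+k))"
    using binomial_absorption[of "j+k" "M+j"] by (metis of_nat_mult)
  have h3b: "real (M+j-(j+k)) * real ((M+j) choose (j+k)) = real (M+j) * real ((M+j-1) choose (j+k))"
    using binomial_absorb_comp[of "M+j" "j+k"] by (metis of_nat_mult)
  have h3: "real (M-k) * real ((M+j) choose (j+k)) = real (j+k+1) * real ((M+j) choose (j+k+1))"
    using h3a h3b by simp
  have Mpos: "real M > 0" using assms by simp
  have "real M * (real ((M-1) choose k) * real ((M+j) choose (j+k)) - real ((M-1) choose (k-1)) * real ((M+j) choose (j+k+1)))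
     = (real M * real ((M-1) choose k)) * real ((M+j) choose (j+k)) - (real M * real ((M-1) choose (k-1))) * real ((M+j) choose (j+k+1))"
    by (simp add: algebra_simps)
  also have "\<dots> = (real (M-k) * real (M choose k)) * real ((M+j) choose (j+k)) - (real k * real (M choose k)) * real ((M+j) choose (j+k+1))"
    unfolding h1 h2 ..
  also have "\<dots> = real (M choose k) * (real (M-k) * real ((M+j) choose (j+k))) - real k * real (M choose k) * real ((M+j) choose (j+k+1))"
    by (simp add: algebra_simps)
  also have "\<dots> = real (M choose k) * (real (j+k+1) * real ((M+j) choose (j+k+1))) - real k * real (M choose k) * real ((M+j) choose (j+k+1))"
    using h3 by simp
  also have "\<dots> = real (j+1) * real (M choose k) * real ((M+j) choose (k+j+1))"
    by (simp add: algebra_simps)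
  finally show ?thesis using Mpos by (simp add: field_simps)
qed

lemma c_count_TF:
  assumes "n \<ge> 1"
  shows "real (c_count n k) = TF n (n-1) (int k)"
proof -
  have "{D. young_diagram D \<and> fits_staircase n D \<and> card (inner_corners n D) = k} = AS n (n-1) k"
    unfolding AS_def fits_staircase_def using assms by fastforce
  moreover obtain p where "n = Suc p" using assms by (cases n) auto
  ultimately show ?thesis unfolding c_count_def using AS_TF[of p p k] by simp
qed

lemma TF_formula:
  assumes "n \<ge> 2" "k \<ge> 1"
  shows "TF n (n-1) (int k) = (\<Sum>i = 1..n - 1 - k. real i / real (n - i) * real ((n - i) choose k) * real ((n - 1) choose (k + i)))"
proof -
  obtain q where q: "n = Suc (Suc q)" using assms(1) by (metis add_2_eq_Suc le_Suc_ex)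
  define g where "g i = real i / real (n - i) * real ((n - i) choose k) * real ((n - 1) choose (k + i))" for i
  have "TF n (n-1) (int k) = (\<Sum>j\<le>Suc q. Q (int (Suc q) - int j) 0 (int j) (int k))"
    unfolding TF_def q by simp
  also have "\<dots> = (\<Sum>j\<le>q. Q (int (Suc q) - int j) 0 (int j) (int k))"
    using assms(2) by (simp add: Q_0)
  also have "\<dots> = (\<Sum>j\<le>q. g (Suc j))"
  proof (rule sum.cong)
    fix j assume "j \<in> {..q}"
    then have jq: "j \<le> q" by simp
    define M where "M = Suc q - j"
    have M1: "M \<ge> 1" using jq unfolding M_def by simp
    have MJ: "M + j = Suc q" using jq unfolding M_def by simp
    have a1: "int (Suc q) - int j = int M" using jq unfolding M_def by simp
    have "Q (int M) 0 (int j) (int k) = cb (int (M-1)) (int k) * cb (int (M+j)) (int (j+k)) - cb (int (M-1)) (int (k-1)) * cb (int (M+j)) (int (j+k+1))"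
      unfolding Q_def using M1 assms(2) by (simp add: of_nat_diff algebra_simps)
    also have "\<dots> = real ((M-1) choose k) * real ((M+j) choose (j+k)) - real ((M-1) choose (k-1)) * real ((M+j) choose (j+k+1))"
      by (simp only: cb_nat)
    also have "\<dots> = g (Suc j)"
      unfolding term_id[OF M1 assms(2)] g_def using MJ q by (simp add: M_def algebra_simps)
    finally show "Q (int (Suc q) - int j) 0 (int j) (int k) = g (Suc j)" unfolding a1 .
  qed simp
  also have "\<dots> = (\<Sum>i = 1..Suc q. g i)"
    using sum.shift_bounds_cl_Suc_ivl[of g 0 q] by (simp add: atLeast0AtMost)
  also have "\<dots> = (\<Sum>i = 1..n - 1 - k. g i)"
  proof (rule sum.mono_neutral_right)
    show "finite {1..Suc q}" by simp
    show "{1..n - 1 - k} \<subseteq> {1..Suc q}" using q by auto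
    show "\<forall>i\<in>{1..Suc q} - {1..n - 1 - k}. g i = 0"
    proof
      fix i assume "i \<in> {1..Suc q} - {1..n - 1 - k}"
      then have "k + i > n - 1" by auto
      then show "g i = 0" unfolding g_def by simp
    qed
  qed
  finally show ?thesis unfolding g_def .
qed

lemma TF_zero:
  assumes "n \<ge> 1"
  shows "TF n (n-1) 0 = 2 ^ (n-1)"
proof -
  obtain p where p: "n = Suc p" using assms by (cases n) auto
  have "TF n (n-1) 0 = (\<Sum>j\<le>p. Q (int p - int j) 0 (int j) 0)"
    unfolding TF_def p by simp
  also have "\<dots> = (\<Sum>j\<le>p. real (p choose j))"
  proof (rule sum.cong)
    fix j assume "j \<in> {..p}"
    then have "int p - int j + int j = int p" by simp
    then show "Q (int p - int j) 0 (int j) 0 = real (p choose j)"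
      unfolding Q_def by (simp add: cb_neg cb_nat)
  qed simp
  also have "\<dots> = real (\<Sum>j\<le>p. p choose j)" by simp
  also have "\<dots> = 2 ^ p" unfolding choose_row_sum by simp
  finally show ?thesis using p by simp
qed

theorem proposition2p9:
  fixes n k :: nat
  assumes "n \<ge> 2" and "k \<ge> 1"
  shows "real (c_count n k) =
           (\<Sum>i = 1..n - 1 - k. real i / real (n - i) * real ((n - i) choose k) * real ((n - 1) choose (k + i))) \<and>
         card {D. young_diagram D \<and> fits_staircase n D \<and> inner_corners n D = {}} = 2 ^ (n - 1)"
proof
  show "real (c_count n k) =
           (\<Sum>i = 1..n - 1 - k. real i / real (n - i) * real ((n - i) choose k) * real ((n - 1) choose (k + i)))"
    using c_count_TF[of n k] TF_formula[OF assms] assms by simp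
  have "{D. young_diagram D \<and> fits_staircase n D \<and> inner_corners n D = {}}
      = {D. young_diagram D \<and> fits_staircase n D \<and> card (inner_corners n D) = 0}"
    using finite_inner by auto
  then have "real (card {D. young_diagram D \<and> fits_staircase n D \<and> inner_corners n D = {}}) = 2 ^ (n-1)"
    using c_count_TF[of n 0] TF_zero[of n] assms unfolding c_count_def by simp
  then have "real (card {D. young_diagram D \<and> fits_staircase n D \<and> inner_corners n D = {}}) = real ((2::nat) ^ (n - 1))"
    by simp
  then show "card {D. young_diagram D \<and> fits_staircase n D \<and> inner_corners n D = {}} = 2 ^ (n - 1)"
    by (simp only: of_nat_eq_iff)
qed


end
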